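(* Let $\Lambda$ be a row-finite $k$-graph with no sources and let $\alpha$ be an action of $\mathbb{Z}^l$ on $\Lambda$ by automorphisms. Then $\Lambda$ is $\alpha$-aperiodic if and only if $\Lambda\times_\alpha\mathbb{Z}^l$ has no local periodicity.
   Context: A $k$-graph is a countable category $\Lambda$ with a functor $d:\Lambda\to\mathbb{N}^k$ with unique factorisation; vertices are degree-$0$ morphisms; row-finite: each $v\Lambda^n$ finite; no sources: each $v\Lambda^n$ nonempty. An automorphism is a bijective degree-preserving functor. $\Lambda\times_\alpha\mathbb{Z}^l$ is the $(k+l)$-graph with morphisms $\Lambda\times\mathbb{N}^l$, degree $(d(\lambda),m)$, $r(\lambda,m)=(r(\lambda),0)$, $s(\lambda,m)=(\alpha_{-m}(s(\lambda)),0)$, $(\mu,m)(\nu,n)=(\mu\alpha_m(\nu),m+n)$. For a $j$-graph $\Gamma$, $\Gamma^\infty$ is the set of degree-preserving functors $x:\Omega_j\to\Gamma$ ($\Omega_j=\{(a,b)\in\mathbb{N}^j\times\mathbb{N}^j:a\le b\}$, $r(a,b)=(a,a)$, $s(a,b)=(b,b)$, $d(a,b)=b-a$, composition $(a,b)(b,c)=(a,c)$), $v\Gamma^\infty=\{x:x(0,0)=v\}$, $\sigma^q(x)(0,n)=x(q,q+n)$. $\Gamma$ has no local periodicity if for every vertex $v$ and distinct $m,n\in\mathbb{N}^j$ there is $x\in v\Gamma^\infty$ with $\sigma^m(x)\ne\sigma^n(x)$. For an automorphism $\phi$ of $\Lambda$, $\phi^\infty(x)(0,n)=\phi(x(0,n))$.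 $\Lambda$ is $\alpha$-aperiodic if for each vertex $v$ and distinct $(p,m),(q,n)\in\mathbb{N}^k\times\mathbb{N}^l$ there is $x\in v\Lambda^\infty$ with $\sigma^p(\alpha^\infty_{-m}(x))\ne\sigma^q(\alpha^\infty_{-n}(x))$. *)

theory Defs
  imports Main "HOL-Library.Countable_Set" "HOL-Library.Function_Algebras"
begin

text \<open>A higher-rank graph is represented as a small category whose morphisms live in a set
  (mor), with range/source maps to identity morphisms, a partial composition (cmp, meaningful
  when src mu = rng nu), and a degree functor into N^k, where N^k is represented by functions
  nat => nat vanishing from index k on.\<close>

record 'm kg =
  mor :: "'m set"
  rng :: "'m \<Rightarrow> 'm"
  src :: "'m \<Rightarrow> 'm"
  cmp :: "'m \<Rightarrow> 'm \<Rightarrow> 'm"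
  deg :: "'m \<Rightarrow> nat \<Rightarrow> nat"

definition NN :: "nat \<Rightarrow> (nat \<Rightarrow> nat) set" where
  "NN k = {n. \<forall>i\<ge>k. n i = 0}"

definition ZZ :: "nat \<Rightarrow> (nat \<Rightarrow> int) set" where
  "ZZ l = {n. \<forall>i\<ge>l. n i = 0}"

definition kgraph :: "nat \<Rightarrow> 'm kg \<Rightarrow> bool" where
  "kgraph k G \<longleftrightarrow>
     countable (mor G) \<and>
     (\<forall>x\<in>mor G. deg G x \<in> NN k) \<and>
     (\<forall>x\<in>mor G. rng G x \<in> mor G \<and> src G x \<in> mor G \<and>
        rng G (rng G x) = rng G x \<and> src G (rng G x) = rng G x \<and>
        rng G (src G x) = src G x \<and> src G (src G x) = src G x \<and>
        cmp G (rng G x) x = x \<and> cmp G x (src G x) = x) \<and>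
     (\<forall>\<mu>\<in>mor G. \<forall>\<nu>\<in>mor G. src G \<mu> = rng G \<nu> \<longrightarrow>
        cmp G \<mu> \<nu> \<in> mor G \<and> rng G (cmp G \<mu> \<nu>) = rng G \<mu> \<and>
        src G (cmp G \<mu> \<nu>) = src G \<nu> \<and> deg G (cmp G \<mu> \<nu>) = deg G \<mu> + deg G \<nu>) \<and>
     (\<forall>\<mu>\<in>mor G. \<forall>\<nu>\<in>mor G. \<forall>\<rho>\<in>mor G. src G \<mu> = rng G \<nu> \<longrightarrow> src G \<nu> = rng G \<rho> \<longrightarrow>
        cmp G (cmp G \<mu> \<nu>) \<rho> = cmp G \<mu> (cmp G \<nu> \<rho>)) \<and>
     (\<forall>x\<in>mor G. \<forall>m n. deg G x = m + n \<longrightarrow>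
        (\<exists>!(\<mu>, \<nu>). \<mu> \<in> mor G \<and> \<nu> \<in> mor G \<and> src G \<mu> = rng G \<nu> \<and>
            deg G \<mu> = m \<and> deg G \<nu> = n \<and> cmp G \<mu> \<nu> = x))"

definition vertex :: "'m kg \<Rightarrow> 'm \<Rightarrow> bool" where
  "vertex G v \<longleftrightarrow> v \<in> mor G \<and> deg G v = 0"

definition paths_from :: "'m kg \<Rightarrow> 'm \<Rightarrow> (nat \<Rightarrow> nat) \<Rightarrow> 'm set" where
  "paths_from G v n = {x \<in> mor G. rng G x = v \<and> deg G x = n}"

definition row_finite :: "nat \<Rightarrow> 'm kg \<Rightarrow> bool" where
  "row_finite k G \<longleftrightarrow> (\<forall>v n. vertex G v \<longrightarrow> n \<in> NN k \<longrightarrow> finite (paths_from G v n))"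

definition no_sources :: "nat \<Rightarrow> 'm kg \<Rightarrow> bool" where
  "no_sources k G \<longleftrightarrow> (\<forall>v n. vertex G v \<longrightarrow> n \<in> NN k \<longrightarrow> paths_from G v n \<noteq> {})"

definition automorphism :: "'m kg \<Rightarrow> ('m \<Rightarrow> 'm) \<Rightarrow> bool" where
  "automorphism G \<phi> \<longleftrightarrow>
     bij_betw \<phi> (mor G) (mor G) \<and>
     (\<forall>x\<in>mor G. deg G (\<phi> x) = deg G x \<and> rng G (\<phi> x) = \<phi> (rng G x) \<and>
        src G (\<phi> x) = \<phi> (src G x)) \<and>
     (\<forall>\<mu>\<in>mor G. \<forall>\<nu>\<in>mor G. src G \<mu> = rng G \<nu> \<longrightarrow>
        \<phi> (cmp G \<mu> \<nu>) = cmp G (\<phi> \<mu>) (\<phi> \<nu>))"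

definition is_action :: "nat \<Rightarrow> 'm kg \<Rightarrow> ((nat \<Rightarrow> int) \<Rightarrow> 'm \<Rightarrow> 'm) \<Rightarrow> bool" where
  "is_action l G \<alpha> \<longleftrightarrow>
     (\<forall>m\<in>ZZ l. automorphism G (\<alpha> m)) \<and>
     (\<forall>x\<in>mor G. \<alpha> 0 x = x) \<and>
     (\<forall>m\<in>ZZ l. \<forall>n\<in>ZZ l. \<forall>x\<in>mor G. \<alpha> (m + n) x = \<alpha> m (\<alpha> n x))"

definition toZ :: "(nat \<Rightarrow> nat) \<Rightarrow> nat \<Rightarrow> int" where
  "toZ m = (\<lambda>i. int (m i))"

definition crossed :: "nat \<Rightarrow> nat \<Rightarrow> 'm kg \<Rightarrow> ((nat \<Rightarrow> int) \<Rightarrow> 'm \<Rightarrow> 'm)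
    \<Rightarrow> ('m \<times> (nat \<Rightarrow> nat)) kg" where
  "crossed k l G \<alpha> =
     \<lparr> mor = {(x, m). x \<in> mor G \<and> m \<in> NN l},
       rng = (\<lambda>(x, m). (rng G x, 0)),
       src = (\<lambda>(x, m). (\<alpha> (- toZ m) (src G x), 0)),
       cmp = (\<lambda>(\<mu>, m) (\<nu>, n). (cmp G \<mu> (\<alpha> (toZ m) \<nu>), m + n)),
       deg = (\<lambda>(x, m) i. if i < k then deg G x i else m (i - k)) \<rparr>"

definition Omega :: "nat \<Rightarrow> ((nat \<Rightarrow> nat) \<times> (nat \<Rightarrow> nat)) set" where
  "Omega j = {(a, b). a \<in> NN j \<and> b \<in> NN j \<and> a \<le> b}"

text \<open>Infinite paths: degree-preserving functors Omega_j -> G; functions are normalised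
  to be undefined outside Omega_j so that equality of functions is equality of functors.\<close>
definition infpaths :: "nat \<Rightarrow> 'm kg \<Rightarrow> (((nat \<Rightarrow> nat) \<times> (nat \<Rightarrow> nat)) \<Rightarrow> 'm) set" where
  "infpaths j G = {x.
     (\<forall>a b. (a, b) \<in> Omega j \<longrightarrow> x (a, b) \<in> mor G \<and> deg G (x (a, b)) = b - a \<and>
        rng G (x (a, b)) = x (a, a) \<and> src G (x (a, b)) = x (b, b)) \<and>
     (\<forall>a b c. (a, b) \<in> Omega j \<longrightarrow> (b, c) \<in> Omega j \<longrightarrow>
        x (a, c) = cmp G (x (a, b)) (x (b, c))) \<and>
     (\<forall>p. p \<notin> Omega j \<longrightarrow> x p = undefined)}"

definition vinfpaths :: "nat \<Rightarrow> 'm kg \<Rightarrow> 'm \<Rightarrow> (((nat \<Rightarrow> nat) \<times> (nat \<Rightarrow> nat)) \<Rightarrow> 'm) set" where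
  "vinfpaths j G v = {x \<in> infpaths j G. x (0, 0) = v}"

definition shift :: "nat \<Rightarrow> (nat \<Rightarrow> nat) \<Rightarrow> (((nat \<Rightarrow> nat) \<times> (nat \<Rightarrow> nat)) \<Rightarrow> 'm)
    \<Rightarrow> (((nat \<Rightarrow> nat) \<times> (nat \<Rightarrow> nat)) \<Rightarrow> 'm)" where
  "shift j q x = (\<lambda>(a, b). if (a, b) \<in> Omega j then x (q + a, q + b) else undefined)"

definition autinf :: "nat \<Rightarrow> ('m \<Rightarrow> 'm) \<Rightarrow> (((nat \<Rightarrow> nat) \<times> (nat \<Rightarrow> nat)) \<Rightarrow> 'm)
    \<Rightarrow> (((nat \<Rightarrow> nat) \<times> (nat \<Rightarrow> nat)) \<Rightarrow> 'm)" where
  "autinf j \<phi> x = (\<lambda>p. if p \<in> Omega j then \<phi> (x p) else undefined)"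

definition no_local_periodicity :: "nat \<Rightarrow> 'm kg \<Rightarrow> bool" where
  "no_local_periodicity j G \<longleftrightarrow>
     (\<forall>v m n. vertex G v \<longrightarrow> m \<in> NN j \<longrightarrow> n \<in> NN j \<longrightarrow> m \<noteq> n \<longrightarrow>
        (\<exists>x\<in>vinfpaths j G v. shift j m x \<noteq> shift j n x))"

definition alpha_aperiodic :: "nat \<Rightarrow> nat \<Rightarrow> 'm kg \<Rightarrow> ((nat \<Rightarrow> int) \<Rightarrow> 'm \<Rightarrow> 'm) \<Rightarrow> bool" where
  "alpha_aperiodic k l G \<alpha> \<longleftrightarrow>
     (\<forall>v p q m n. vertex G v \<longrightarrow> p \<in> NN k \<longrightarrow> q \<in> NN k \<longrightarrow> m \<in> NN l \<longrightarrow> n \<in> NN l \<longrightarrow>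
        (p, m) \<noteq> (q, n) \<longrightarrow>
        (\<exists>x\<in>vinfpaths k G v.
           shift k p (autinf k (\<alpha> (- toZ m)) x) \<noteq> shift k q (autinf k (\<alpha> (- toZ n)) x)))"

end

theory Submission imports Defs begin

definition lo :: "nat \<Rightarrow> (nat \<Rightarrow> nat) \<Rightarrow> nat \<Rightarrow> nat" where
  "lo k c = (\<lambda>i. if i < k then c i else 0)"
definition hi :: "nat \<Rightarrow> (nat \<Rightarrow> nat) \<Rightarrow> nat \<Rightarrow> nat" where
  "hi k c = (\<lambda>j. c (k + j))"
definition jn :: "nat \<Rightarrow> (nat \<Rightarrow> nat) \<Rightarrow> (nat \<Rightarrow> nat) \<Rightarrow> nat \<Rightarrow> nat" where
  "jn k p m = (\<lambda>i. if i < k then p i else m (i - k))"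

lemmas fa = fun_eq_iff le_fun_def plus_fun_def fun_diff_def zero_fun_def NN_def lo_def hi_def jn_def

lemma lo_jn: "p \<in> NN k \<Longrightarrow> lo k (jn k p m) = p" by (auto simp: fa)
lemma hi_jn: "hi k (jn k p m) = m" by (auto simp: fa)
lemma jn_lohi: "c \<in> NN (k+l) \<Longrightarrow> jn k (lo k c) (hi k c) = c" by (auto simp: fa)
lemma lo_NN: "lo k c \<in> NN k" by (auto simp: fa)
lemma hi_NN: "c \<in> NN (k+l) \<Longrightarrow> hi k c \<in> NN l" by (auto simp: fa)
lemma jn_NN: "p \<in> NN k \<Longrightarrow> m \<in> NN l \<Longrightarrow> jn k p m \<in> NN (k+l)"
  by (auto simp: fa)
lemma lo_add: "lo k (a + b) = lo k a + lo k b" by (auto simp: fa)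
lemma hi_add: "hi k (a + b) = hi k a + hi k b" by (auto simp: fa)
lemma lo_diff: "lo k (a - b) = lo k a - lo k b" by (auto simp: fa)
lemma hi_diff: "hi k (a - b) = hi k a - hi k b" by (auto simp: fa)
lemma lo_mono: "a \<le> b \<Longrightarrow> lo k a \<le> lo k b" by (auto simp: fa)
lemma hi_mono: "a \<le> b \<Longrightarrow> hi k a \<le> hi k b" by (auto simp: fa)
lemma jn_add: "jn k (p+q) (m+n) = jn k p m + jn k q n" by (auto simp: fa)
lemma jn_diff: "jn k (p-q) (m-n) = jn k p m - jn k q n" by (auto simp: fa)
lemma jn_mono: "p \<le> q \<Longrightarrow> m \<le> n \<Longrightarrow> jn k p m \<le> jn k q n" by (auto simp: fa)
lemma jn_inj: "p \<in> NN k \<Longrightarrow> q \<in> NN k \<Longrightarrow> jn k p m = jn k q n \<Longrightarrow> p = q \<and> m = n"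
  by (metis lo_jn hi_jn)
lemma jn_00: "jn k 0 0 = 0" by (auto simp: fa)
lemma lo_0: "lo k 0 = 0" and hi_0: "hi k 0 = 0" by (auto simp: fa)
lemma NN_add: "a \<in> NN j \<Longrightarrow> b \<in> NN j \<Longrightarrow> a + b \<in> NN j" by (auto simp: fa)
lemma NN_diff: "a \<in> NN j \<Longrightarrow> a - b \<in> NN j" by (auto simp: fa)
lemma NN_0: "0 \<in> NN j" by (auto simp: fa)
lemma Omega_iff: "(a,b) \<in> Omega j \<longleftrightarrow> a \<in> NN j \<and> b \<in> NN j \<and> a \<le> b" by (simp add: Omega_def)

lemma toZ_add: "toZ (m + n) = toZ m + toZ n" by (auto simp: toZ_def fun_eq_iff plus_fun_def)
lemma toZ_diff: "m \<le> n \<Longrightarrow> toZ (n - m) = toZ n - toZ m" by (auto simp: toZ_def fun_eq_iff fun_diff_def le_fun_def of_nat_diff)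
lemma toZ_0: "toZ 0 = 0" by (auto simp: toZ_def fun_eq_iff zero_fun_def)
lemma toZ_ZZ: "m \<in> NN l \<Longrightarrow> toZ m \<in> ZZ l" by (auto simp: toZ_def NN_def ZZ_def)
lemma ZZ_uminus: "m \<in> ZZ l \<Longrightarrow> - m \<in> ZZ l" by (auto simp: ZZ_def)
lemma ZZ_add: "m \<in> ZZ l \<Longrightarrow> n \<in> ZZ l \<Longrightarrow> m + n \<in> ZZ l" by (auto simp: ZZ_def)



definition Yp :: "nat \<Rightarrow> nat \<Rightarrow> ((nat \<Rightarrow> int) \<Rightarrow> 'm \<Rightarrow> 'm) \<Rightarrow> (((nat \<Rightarrow> nat) \<times> (nat \<Rightarrow> nat)) \<Rightarrow> 'm)
   \<Rightarrow> (((nat \<Rightarrow> nat) \<times> (nat \<Rightarrow> nat)) \<Rightarrow> 'm \<times> (nat \<Rightarrow> nat))" where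
  "Yp k l \<alpha> x = (\<lambda>(a, b). if (a, b) \<in> Omega (k + l)
      then (\<alpha> (- toZ (hi k a)) (x (lo k a, lo k b)), hi k b - hi k a) else undefined)"

definition Xp :: "nat \<Rightarrow> (((nat \<Rightarrow> nat) \<times> (nat \<Rightarrow> nat)) \<Rightarrow> 'm \<times> (nat \<Rightarrow> nat))
   \<Rightarrow> (((nat \<Rightarrow> nat) \<times> (nat \<Rightarrow> nat)) \<Rightarrow> 'm)" where
  "Xp k y = (\<lambda>(p, q). if (p, q) \<in> Omega k then fst (y (jn k p 0, jn k q 0)) else undefined)"

lemma crossed_simps:
  "mor (crossed k l G \<alpha>) = {(x, m). x \<in> mor G \<and> m \<in> NN l}"
  "rng (crossed k l G \<alpha>) (x, m) = (rng G x, 0)"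
  "src (crossed k l G \<alpha>) (x, m) = (\<alpha> (- toZ m) (src G x), 0)"
  "cmp (crossed k l G \<alpha>) (\<mu>, m) (\<nu>, n) = (cmp G \<mu> (\<alpha> (toZ m) \<nu>), m + n)"
  "deg (crossed k l G \<alpha>) (x, m) = jn k (deg G x) m"
  by (simp_all add: crossed_def jn_def)

lemma fdiff_self: "(h::nat\<Rightarrow>nat) - h = 0" by (simp add: fa)
lemma fdiff_add: "(a::nat\<Rightarrow>nat) \<le> b \<Longrightarrow> b \<le> c \<Longrightarrow> (b - a) + (c - b) = c - a" by (auto simp: fa)
lemma fadd_diff: "(a::nat\<Rightarrow>nat) \<le> b \<Longrightarrow> a + (b - a) = b" by (auto simp: fa)
lemma fadd_diff2: "((b::nat\<Rightarrow>nat) + m) - (a + m) = b - a" by (auto simp: fa)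

lemma infpathsD:
  assumes "x \<in> infpaths j H"
  shows "\<And>a b. (a, b) \<in> Omega j \<Longrightarrow> x (a, b) \<in> mor H \<and> deg H (x (a, b)) = b - a \<and>
        rng H (x (a, b)) = x (a, a) \<and> src H (x (a, b)) = x (b, b)"
    "\<And>a b c. (a, b) \<in> Omega j \<Longrightarrow> (b, c) \<in> Omega j \<Longrightarrow>
        x (a, c) = cmp H (x (a, b)) (x (b, c))"
    "\<And>p. p \<notin> Omega j \<Longrightarrow> x p = undefined"
  using assms unfolding infpaths_def by blast+

context
  fixes k l :: nat and G :: "'m kg" and \<alpha> :: "(nat \<Rightarrow> int) \<Rightarrow> 'm \<Rightarrow> 'm"
  assumes KG: "kgraph k G" and ACT: "is_action l G \<alpha>"
begin

lemma kgD1: "\<forall>x\<in>mor G. deg G x \<in> NN k"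
  using KG unfolding kgraph_def by (elim conjE) assumption
lemma kgD2: "\<forall>x\<in>mor G. rng G x \<in> mor G \<and> src G x \<in> mor G \<and>
        rng G (rng G x) = rng G x \<and> src G (rng G x) = rng G x \<and>
        rng G (src G x) = src G x \<and> src G (src G x) = src G x \<and>
        cmp G (rng G x) x = x \<and> cmp G x (src G x) = x"
  using KG unfolding kgraph_def by (elim conjE) assumption
lemma kgD3: "\<forall>\<mu>\<in>mor G. \<forall>\<nu>\<in>mor G. src G \<mu> = rng G \<nu> \<longrightarrow>
        cmp G \<mu> \<nu> \<in> mor G \<and> rng G (cmp G \<mu> \<nu>) = rng G \<mu> \<and>
        src G (cmp G \<mu> \<nu>) = src G \<nu> \<and> deg G (cmp G \<mu> \<nu>) = deg G \<mu> + deg G \<nu>"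
  using KG unfolding kgraph_def by (elim conjE) assumption
lemmas kgD = kgD1 kgD2 kgD3

lemma kg_basic:
  assumes "x \<in> mor G"
  shows "rng G x \<in> mor G" "src G x \<in> mor G" "cmp G (rng G x) x = x" "cmp G x (src G x) = x"
    "deg G x \<in> NN k"
    "rng G (rng G x) = rng G x" "src G (rng G x) = rng G x"
     "rng G (src G x) = src G x" "src G (src G x) = src G x"
  using kgD(1,2) assms by blast+

lemma kg_cmp:
  assumes "\<mu> \<in> mor G" "\<nu> \<in> mor G" "src G \<mu> = rng G \<nu>"
  shows "cmp G \<mu> \<nu> \<in> mor G" "rng G (cmp G \<mu> \<nu>) = rng G \<mu>"
    "src G (cmp G \<mu> \<nu>) = src G \<nu>" "deg G (cmp G \<mu> \<nu>) = deg G \<mu> + deg G \<nu>"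
  using kgD(3) assms by blast+

lemma deg0_id:
  assumes x: "x \<in> mor G" and d: "deg G x = 0"
  shows "rng G x = x" "src G x = x"
proof -
  have UF: "\<forall>x\<in>mor G. \<forall>m n. deg G x = m + n \<longrightarrow>
        (\<exists>!(\<mu>, \<nu>). \<mu> \<in> mor G \<and> \<nu> \<in> mor G \<and> src G \<mu> = rng G \<nu> \<and>
            deg G \<mu> = m \<and> deg G \<nu> = n \<and> cmp G \<mu> \<nu> = x)"
    using KG unfolding kgraph_def by (elim conjE) assumption
  define P where "P = (\<lambda>z. case z of (\<mu>, \<nu>) \<Rightarrow> \<mu> \<in> mor G \<and> \<nu> \<in> mor G \<and> src G \<mu> = rng G \<nu> \<and>
            deg G \<mu> = 0 \<and> deg G \<nu> = 0 \<and> cmp G \<mu> \<nu> = x)"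
  have d0: "deg G x = 0 + 0" using d by simp
  have u: "\<exists>!z. P z" using UF[rule_format, OF x d0] unfolding P_def .
  note kb = kg_basic[OF x]
  have dr0: "deg G (cmp G (rng G x) x) = deg G (rng G x) + deg G x"
    by (rule kg_cmp(4)) (use kb x in auto)
  hence dr: "deg G (rng G x) = 0" using kb(3) d by simp
  have ds0: "deg G (cmp G x (src G x)) = deg G x + deg G (src G x)"
    by (rule kg_cmp(4)) (use kb x in auto)
  hence ds: "deg G (src G x) = 0" using kb(4) d by simp
  have A: "P (rng G x, x)" unfolding P_def using kb dr d x by simp
  have B: "P (x, src G x)" unfolding P_def using kb ds d x by simp
  have "(rng G x, x) = (x, src G x)" using u A B by blast
  thus "rng G x = x" "src G x = x" by auto
qed

lemma act_aut: "m \<in> ZZ l \<Longrightarrow> automorphism G (\<alpha> m)" using ACT by (simp add: is_action_def)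
lemma act_0: "x \<in> mor G \<Longrightarrow> \<alpha> 0 x = x" using ACT by (simp add: is_action_def)
lemma act_comp: "m \<in> ZZ l \<Longrightarrow> n \<in> ZZ l \<Longrightarrow> x \<in> mor G \<Longrightarrow> \<alpha> (m + n) x = \<alpha> m (\<alpha> n x)"
  using ACT by (simp add: is_action_def)

lemma act_mor: "m \<in> ZZ l \<Longrightarrow> x \<in> mor G \<Longrightarrow> \<alpha> m x \<in> mor G"
  using act_aut[of m] unfolding automorphism_def bij_betw_def by auto
lemma act_props: "m \<in> ZZ l \<Longrightarrow> x \<in> mor G \<Longrightarrow>
   deg G (\<alpha> m x) = deg G x \<and> rng G (\<alpha> m x) = \<alpha> m (rng G x) \<and> src G (\<alpha> m x) = \<alpha> m (src G x)"
  using act_aut[of m] unfolding automorphism_def by auto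
lemma act_cmp: "m \<in> ZZ l \<Longrightarrow> \<mu> \<in> mor G \<Longrightarrow> \<nu> \<in> mor G \<Longrightarrow> src G \<mu> = rng G \<nu> \<Longrightarrow>
   \<alpha> m (cmp G \<mu> \<nu>) = cmp G (\<alpha> m \<mu>) (\<alpha> m \<nu>)"
  using act_aut[of m] unfolding automorphism_def by auto
lemma act_inv: "m \<in> ZZ l \<Longrightarrow> x \<in> mor G \<Longrightarrow> \<alpha> m (\<alpha> (- m) x) = x"
  using act_comp[of m "-m" x] act_0 ZZ_uminus by simp
lemma act_inv': "m \<in> ZZ l \<Longrightarrow> x \<in> mor G \<Longrightarrow> \<alpha> (- m) (\<alpha> m x) = x"
  using act_comp[of "-m" m x] act_0 ZZ_uminus by simp


lemma vertex_crossed: "vertex (crossed k l G \<alpha>) w \<longleftrightarrow> (\<exists>v. w = (v, 0) \<and> vertex G v)"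
proof
  assume "vertex (crossed k l G \<alpha>) w"
  then obtain x m where w: "w = (x, m)" "x \<in> mor G" "m \<in> NN l" "jn k (deg G x) m = 0"
    by (cases w) (auto simp: vertex_def crossed_simps)
  have "jn k (deg G x) m = jn k 0 0" using w jn_00 by simp
  hence "deg G x = 0 \<and> m = 0" using jn_inj kg_basic(5)[OF w(2)] NN_0 by blast
  thus "\<exists>v. w = (v, 0) \<and> vertex G v" using w by (auto simp: vertex_def)
next
  assume "\<exists>v. w = (v, 0) \<and> vertex G v"
  thus "vertex (crossed k l G \<alpha>) w" by (auto simp: vertex_def crossed_simps NN_0 jn_00)
qed

lemma claimA:
  assumes x: "x \<in> infpaths k G"
  shows "Yp k l \<alpha> x \<in> infpaths (k + l) (crossed k l G \<alpha>)"
proof -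
  note xD = infpathsD[OF x]
  have Y: "Yp k l \<alpha> x (a, b) = (\<alpha> (- toZ (hi k a)) (x (lo k a, lo k b)), hi k b - hi k a)"
    if "(a, b) \<in> Omega (k + l)" for a b using that by (simp add: Yp_def)
  have lo_Om: "(lo k a, lo k b) \<in> Omega k" if "(a, b) \<in> Omega (k + l)" for a b
    using that lo_NN lo_mono by (simp add: Omega_iff)
  have hiN: "hi k a \<in> NN l" "hi k b \<in> NN l" "hi k a \<le> hi k b" if "(a, b) \<in> Omega (k + l)" for a b
    using that hi_NN hi_mono by (auto simp: Omega_iff)
  have zZ: "- toZ (hi k a) \<in> ZZ l" if "(a, b) \<in> Omega (k + l)" for a b
    using hiN[OF that] toZ_ZZ ZZ_uminus by blast
  have part1: "Yp k l \<alpha> x (a, b) \<in> mor (crossed k l G \<alpha>) \<and>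
      deg (crossed k l G \<alpha>) (Yp k l \<alpha> x (a, b)) = b - a \<and>
      rng (crossed k l G \<alpha>) (Yp k l \<alpha> x (a, b)) = Yp k l \<alpha> x (a, a) \<and>
      src (crossed k l G \<alpha>) (Yp k l \<alpha> x (a, b)) = Yp k l \<alpha> x (b, b)"
    if ab: "(a, b) \<in> Omega (k + l)" for a b
  proof -
    have aa: "(a, a) \<in> Omega (k + l)" "(b, b) \<in> Omega (k + l)" using ab by (auto simp: Omega_iff)
    note L = lo_Om[OF ab] and H = hiN[OF ab] and Z = zZ[OF ab]
    have Zb: "- toZ (hi k b) \<in> ZZ l" using zZ[OF aa(2)] .
    obtain xm: "x (lo k a, lo k b) \<in> mor G" and xd: "deg G (x (lo k a, lo k b)) = lo k b - lo k a"
      and xr: "rng G (x (lo k a, lo k b)) = x (lo k a, lo k a)"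
      and xs: "src G (x (lo k a, lo k b)) = x (lo k b, lo k b)" using xD(1)[OF L] by blast
    have xbm: "x (lo k b, lo k b) \<in> mor G" using xs kg_basic(2)[OF xm] by simp
    have m: "Yp k l \<alpha> x (a, b) \<in> mor (crossed k l G \<alpha>)"
      using Y[OF ab] act_mor[OF Z xm] NN_diff[OF H(2)] by (simp add: crossed_simps)
    have "deg (crossed k l G \<alpha>) (Yp k l \<alpha> x (a, b)) = jn k (lo k b - lo k a) (hi k b - hi k a)"
      using Y[OF ab] act_props[OF Z xm] xd by (simp add: crossed_simps)
    also have "\<dots> = b - a" using jn_diff[of k] jn_lohi[of a k l] jn_lohi[of b k l] ab by (simp add: Omega_iff)
    finally have d: "deg (crossed k l G \<alpha>) (Yp k l \<alpha> x (a, b)) = b - a" .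
    have r: "rng (crossed k l G \<alpha>) (Yp k l \<alpha> x (a, b)) = Yp k l \<alpha> x (a, a)"
      using Y[OF ab] Y[OF aa(1)] act_props[OF Z xm] xr by (simp add: crossed_simps fdiff_self)
    have tz: "- toZ (hi k b - hi k a) + - toZ (hi k a) = - toZ (hi k b)"
      using toZ_diff[OF H(3)] by simp
    have hz: "- toZ (hi k b - hi k a) \<in> ZZ l" using toZ_ZZ ZZ_uminus NN_diff H by blast
    have "src (crossed k l G \<alpha>) (Yp k l \<alpha> x (a, b))
       = (\<alpha> (- toZ (hi k b - hi k a)) (\<alpha> (- toZ (hi k a)) (x (lo k b, lo k b))), 0)"
      using Y[OF ab] act_props[OF Z xm] xs by (simp add: crossed_simps)
    also have "\<dots> = (\<alpha> (- toZ (hi k b)) (x (lo k b, lo k b)), 0)"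
      using act_comp[OF hz Z xbm] tz by simp
    also have "\<dots> = Yp k l \<alpha> x (b, b)" using Y[OF aa(2)] by (simp add: fdiff_self)
    finally show ?thesis using m d r by blast
  qed
  have part2: "Yp k l \<alpha> x (a, c) = cmp (crossed k l G \<alpha>) (Yp k l \<alpha> x (a, b)) (Yp k l \<alpha> x (b, c))"
    if ab: "(a, b) \<in> Omega (k + l)" and bc: "(b, c) \<in> Omega (k + l)" for a b c
  proof -
    have ac: "(a, c) \<in> Omega (k + l)" using ab bc by (auto simp: Omega_iff)
    note Hab = hiN[OF ab] and Hbc = hiN[OF bc]
    have Za: "- toZ (hi k a) \<in> ZZ l" using zZ[OF ab] .
    have Zb: "- toZ (hi k b) \<in> ZZ l" using zZ[OF bc] .
    have Zd: "toZ (hi k b - hi k a) \<in> ZZ l" using toZ_ZZ NN_diff Hab by blast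
    have m1: "x (lo k a, lo k b) \<in> mor G" using xD(1)[OF lo_Om[OF ab]] by blast
    have m2: "x (lo k b, lo k c) \<in> mor G" using xD(1)[OF lo_Om[OF bc]] by blast
    have sr: "src G (x (lo k a, lo k b)) = rng G (x (lo k b, lo k c))"
      using xD(1)[OF lo_Om[OF ab]] xD(1)[OF lo_Om[OF bc]] by simp
    have tz: "toZ (hi k b - hi k a) + - toZ (hi k b) = - toZ (hi k a)"
      using toZ_diff[OF Hab(3)] by simp
    have e1: "\<alpha> (toZ (hi k b - hi k a)) (\<alpha> (- toZ (hi k b)) (x (lo k b, lo k c)))
       = \<alpha> (- toZ (hi k a)) (x (lo k b, lo k c))"
      using act_comp[OF Zd Zb m2] tz by simp
    have "cmp (crossed k l G \<alpha>) (Yp k l \<alpha> x (a, b)) (Yp k l \<alpha> x (b, c))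
      = (cmp G (\<alpha> (- toZ (hi k a)) (x (lo k a, lo k b))) (\<alpha> (- toZ (hi k a)) (x (lo k b, lo k c))),
         (hi k b - hi k a) + (hi k c - hi k b))"
      using Y[OF ab] Y[OF bc] e1 by (simp add: crossed_simps)
    also have "\<dots> = (\<alpha> (- toZ (hi k a)) (x (lo k a, lo k c)), hi k c - hi k a)"
      using act_cmp[OF Za m1 m2 sr] xD(2)[OF lo_Om[OF ab] lo_Om[OF bc]] fdiff_add[OF Hab(3) Hbc(3)]
      by simp
    also have "\<dots> = Yp k l \<alpha> x (a, c)" using Y[OF ac] by simp
    finally show ?thesis by simp
  qed
  have part3: "Yp k l \<alpha> x p = undefined" if "p \<notin> Omega (k + l)" for p
    using that by (cases p) (simp add: Yp_def)
  show ?thesis unfolding infpaths_def using part1 part2 part3 by blast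
qed

lemma jn_subs: "jn k p m - jn k p 0 = jn k 0 m" by (auto simp: fa)
lemma jn_sub0: "jn k q 0 - jn k p 0 = jn k (q - p) 0" using jn_diff[of k q p 0 0] by simp

lemma claimB:
  assumes y: "y \<in> infpaths (k + l) (crossed k l G \<alpha>)"
  shows "Xp k y \<in> infpaths k G" "y = Yp k l \<alpha> (Xp k y)"
proof -
  note yD = infpathsD[OF y]
  have jO: "(jn k p m, jn k q n) \<in> Omega (k + l)"
    if "(p, q) \<in> Omega k" "m \<in> NN l" "n \<in> NN l" "m \<le> n" for p q m n
    using that jn_NN jn_mono by (simp add: Omega_iff)
  have yPQ: "y (jn k p 0, jn k q 0) = (Xp k y (p, q), 0) \<and> Xp k y (p, q) \<in> mor G \<and>
      deg G (Xp k y (p, q)) = q - p" if pq: "(p, q) \<in> Omega k" for p q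
  proof -
    have O: "(jn k p 0, jn k q 0) \<in> Omega (k + l)" using jO[OF pq NN_0 NN_0] by simp
    obtain z t where zt: "y (jn k p 0, jn k q 0) = (z, t)" by fastforce
    have zm: "z \<in> mor G" "t \<in> NN l" using yD(1)[OF O] zt by (auto simp: crossed_simps)
    have "jn k (deg G z) t = jn k (q - p) 0" using yD(1)[OF O] zt jn_sub0 by (simp add: crossed_simps)
    hence "deg G z = q - p \<and> t = 0" using jn_inj kg_basic(5)[OF zm(1)] NN_diff pq
      by (simp add: Omega_iff) blast
    moreover have "Xp k y (p, q) = z" using pq zt by (simp add: Xp_def)
    ultimately show ?thesis using zt zm by simp
  qed
  show X: "Xp k y \<in> infpaths k G"
  proof -
    have p1: "Xp k y (p, q) \<in> mor G \<and> deg G (Xp k y (p, q)) = q - p \<and>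
        rng G (Xp k y (p, q)) = Xp k y (p, p) \<and> src G (Xp k y (p, q)) = Xp k y (q, q)"
      if pq: "(p, q) \<in> Omega k" for p q
    proof -
      have O: "(jn k p 0, jn k q 0) \<in> Omega (k + l)" using jO[OF pq NN_0 NN_0] by simp
      have pp: "(p, p) \<in> Omega k" "(q, q) \<in> Omega k" using pq by (auto simp: Omega_iff)
      note e = yPQ[OF pq] and e1 = yPQ[OF pp(1)] and e2 = yPQ[OF pp(2)]
      have r: "rng G (Xp k y (p, q)) = Xp k y (p, p)"
        using yD(1)[OF O] e e1 by (simp add: crossed_simps)
      have "src (crossed k l G \<alpha>) (y (jn k p 0, jn k q 0)) = y (jn k q 0, jn k q 0)"
        using yD(1)[OF O] by blast
      hence "\<alpha> 0 (src G (Xp k y (p, q))) = Xp k y (q, q)"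
        using e e2 by (simp add: crossed_simps toZ_0)
      hence sr: "src G (Xp k y (p, q)) = Xp k y (q, q)" using act_0 kg_basic(2) e by simp
      show ?thesis using e r sr by blast
    qed
    have p2: "Xp k y (p, r) = cmp G (Xp k y (p, q)) (Xp k y (q, r))"
      if pq: "(p, q) \<in> Omega k" and qr: "(q, r) \<in> Omega k" for p q r
    proof -
      have pr: "(p, r) \<in> Omega k" using pq qr by (auto simp: Omega_iff)
      have O1: "(jn k p 0, jn k q 0) \<in> Omega (k + l)" using jO[OF pq NN_0 NN_0] by simp
      have O2: "(jn k q 0, jn k r 0) \<in> Omega (k + l)" using jO[OF qr NN_0 NN_0] by simp
      have "y (jn k p 0, jn k r 0) = cmp (crossed k l G \<alpha>) (y (jn k p 0, jn k q 0)) (y (jn k q 0, jn k r 0))"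
        using yD(2)[OF O1 O2] .
      thus ?thesis using yPQ[OF pq] yPQ[OF qr] yPQ[OF pr] act_0 by (simp add: crossed_simps toZ_0)
    qed
    have p3: "Xp k y p = undefined" if "p \<notin> Omega k" for p
      using that by (cases p) (simp add: Xp_def)
    show ?thesis unfolding infpaths_def using p1 p2 p3 by blast
  qed
  show "y = Yp k l \<alpha> (Xp k y)"
  proof (rule ext, clarify)
    fix a b
    show "y (a, b) = Yp k l \<alpha> (Xp k y) (a, b)"
    proof (cases "(a, b) \<in> Omega (k + l)")
      case False
      thus ?thesis using yD(3) by (simp add: Yp_def)
    next
      case ab: True
      define p m q n where "p = lo k a" "m = hi k a" "q = lo k b" "n = hi k b"
      have aN: "a \<in> NN (k + l)" "b \<in> NN (k + l)" "a \<le> b" using ab by (auto simp: Omega_iff)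
      have a_eq: "a = jn k p m" "b = jn k q n" using jn_lohi aN p_m_q_n_def by auto
      have pqN: "p \<in> NN k" "q \<in> NN k" "m \<in> NN l" "n \<in> NN l" "p \<le> q" "m \<le> n"
        using lo_NN hi_NN aN lo_mono hi_mono p_m_q_n_def by auto
      have pq: "(p, q) \<in> Omega k" using pqN by (simp add: Omega_iff)
      have pp: "(p, p) \<in> Omega k" "(q, q) \<in> Omega k" using pqN by (auto simp: Omega_iff)
      define A0 B0 where "A0 = jn k p 0" "B0 = jn k q 0"
      have OA: "(A0, a) \<in> Omega (k + l)" using jO[OF pp(1) NN_0 pqN(3)] a_eq A0_B0_def by (simp add: le_fun_def)
      have OB: "(B0, b) \<in> Omega (k + l)" using jO[OF pp(2) NN_0 pqN(4)] a_eq A0_B0_def by (simp add: le_fun_def)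
      have OAB: "(A0, B0) \<in> Omega (k + l)" using jO[OF pq NN_0 NN_0] A0_B0_def by simp
      have aa: "(a, a) \<in> Omega (k + l)" "(B0, B0) \<in> Omega (k + l)" using ab OB by (auto simp: Omega_iff)
      obtain \<mu> t where mt: "y (a, b) = (\<mu>, t)" by fastforce
      obtain w' m' where wm': "y (A0, a) = (w', m')" by fastforce
      obtain w n' where wn: "y (B0, b) = (w, n')" by fastforce
      have \<mu>m: "\<mu> \<in> mor G" "t \<in> NN l" using yD(1)[OF ab] mt by (auto simp: crossed_simps)
      have w'm: "w' \<in> mor G" using yD(1)[OF OA] wm' by (auto simp: crossed_simps)
      have wm: "w \<in> mor G" using yD(1)[OF OB] wn by (auto simp: crossed_simps)
      have "jn k (deg G \<mu>) t = jn k (q - p) (n - m)"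
        using yD(1)[OF ab] mt a_eq jn_diff by (simp add: crossed_simps)
      hence tt: "t = n - m" using jn_inj kg_basic(5)[OF \<mu>m(1)] NN_diff pqN by blast
      have "jn k (deg G w') m' = jn k 0 m"
        using yD(1)[OF OA] wm' a_eq A0_B0_def jn_subs by (simp add: crossed_simps)
      hence dw': "deg G w' = 0" and mm: "m' = m" using jn_inj kg_basic(5)[OF w'm] NN_0 by blast+
      have "jn k (deg G w) n' = jn k 0 n"
        using yD(1)[OF OB] wn a_eq A0_B0_def jn_subs by (simp add: crossed_simps)
      hence dw: "deg G w = 0" and nn: "n' = n" using jn_inj kg_basic(5)[OF wm] NN_0 by blast+
      note X0 = yPQ[OF pq, folded A0_B0_def]
      note XB = yPQ[OF pp(2), folded A0_B0_def]
      have zm: "toZ m \<in> ZZ l" using toZ_ZZ pqN by blast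
      have nu: "\<alpha> (toZ m) \<mu> \<in> mor G" using act_mor[OF zm \<mu>m(1)] .
      have "src (crossed k l G \<alpha>) (y (A0, a)) = rng (crossed k l G \<alpha>) (y (a, b))"
        using yD(1)[OF OA] yD(1)[OF ab] by simp
      hence s1: "\<alpha> (- toZ m) (src G w') = rng G \<mu>" using wm' mt mm by (simp add: crossed_simps)
      have rnu: "rng G (\<alpha> (toZ m) \<mu>) = w'"
        using act_props[OF zm \<mu>m(1)] s1[symmetric] act_inv[OF zm kg_basic(2)[OF w'm]] deg0_id[OF w'm dw']
        by simp
      have L: "cmp G w' (\<alpha> (toZ m) \<mu>) = \<alpha> (toZ m) \<mu>"
        using kg_basic(3)[OF nu] rnu by simp
      have "src (crossed k l G \<alpha>) (y (A0, B0)) = rng (crossed k l G \<alpha>) (y (B0, b))"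
        using yD(1)[OF OAB] yD(1)[OF OB] by simp
      hence "\<alpha> 0 (src G (Xp k y (p, q))) = rng G w" using X0 wn by (simp add: crossed_simps toZ_0)
      hence s2: "src G (Xp k y (p, q)) = w"
        using act_0 kg_basic(2) X0 deg0_id[OF wm dw] by simp
      have R: "cmp G (Xp k y (p, q)) (\<alpha> (toZ 0) w) = Xp k y (p, q)"
        using act_0[OF wm] kg_basic(4)[of "Xp k y (p, q)"] X0 s2 toZ_0 by simp
      have "y (A0, b) = cmp (crossed k l G \<alpha>) (y (A0, a)) (y (a, b))" using yD(2)[OF OA ab] .
      moreover have "y (A0, b) = cmp (crossed k l G \<alpha>) (y (A0, B0)) (y (B0, b))" using yD(2)[OF OAB OB] .
      ultimately have "cmp G w' (\<alpha> (toZ m) \<mu>) = cmp G (Xp k y (p, q)) (\<alpha> (toZ 0) w)"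
        using wm' mt X0 wn mm by (simp add: crossed_simps)
      hence "\<alpha> (toZ m) \<mu> = Xp k y (p, q)" using L R by simp
      hence "\<mu> = \<alpha> (- toZ m) (Xp k y (p, q))" using act_inv'[OF zm \<mu>m(1)] by simp
      thus ?thesis using mt tt ab pq p_m_q_n_def by (simp add: Yp_def)
    qed
  qed
qed

lemma shiftY:
  assumes x: "x \<in> infpaths k G" and ab: "(a, b) \<in> Omega (k + l)" and p: "p \<in> NN k" and m: "m \<in> NN l"
  shows "shift (k + l) (jn k p m) (Yp k l \<alpha> x) (a, b) =
     (\<alpha> (- toZ (hi k a)) (\<alpha> (- toZ m) (x (p + lo k a, p + lo k b))), hi k b - hi k a)"
proof -
  have c: "jn k p m \<in> NN (k + l)" using jn_NN p m .
  have O: "(jn k p m + a, jn k p m + b) \<in> Omega (k + l)" using ab c NN_add by (auto simp: Omega_iff add_left_mono)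
  have l1: "lo k (jn k p m + a) = p + lo k a" "lo k (jn k p m + b) = p + lo k b"
    using lo_add lo_jn[OF p] by simp_all
  have h1: "hi k (jn k p m + a) = m + hi k a" "hi k (jn k p m + b) = m + hi k b"
    using hi_add hi_jn by simp_all
  have ha: "hi k a \<in> NN l" using hi_NN ab by (auto simp: Omega_iff)
  have Lo: "(p + lo k a, p + lo k b) \<in> Omega k"
    using ab lo_NN lo_mono NN_add p by (auto simp: Omega_iff add_left_mono)
  have xm: "x (p + lo k a, p + lo k b) \<in> mor G" using infpathsD(1)[OF x Lo] by blast
  have zz: "- toZ (hi k a) \<in> ZZ l" "- toZ m \<in> ZZ l" using toZ_ZZ ZZ_uminus ha m by blast+
  have "- toZ (m + hi k a) = - toZ (hi k a) + - toZ m" by (simp add: toZ_add)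
  hence e: "\<alpha> (- toZ (m + hi k a)) (x (p + lo k a, p + lo k b)) = \<alpha> (- toZ (hi k a)) (\<alpha> (- toZ m) (x (p + lo k a, p + lo k b)))"
    using act_comp[OF zz xm] by simp
  show ?thesis using ab O l1 h1 e fadd_diff2[of "hi k b" m "hi k a"]
    by (simp add: shift_def Yp_def add.commute)
qed

lemma shiftX:
  assumes "(a, b) \<in> Omega k" and "p \<in> NN k"
  shows "shift k p (autinf k \<phi> x) (a, b) = \<phi> (x (p + a, p + b))"
proof -
  have "(p + a, p + b) \<in> Omega k" using assms NN_add by (auto simp: Omega_iff add_left_mono)
  thus ?thesis using assms by (simp add: shift_def autinf_def)
qed

lemma shift_undef: "z \<notin> Omega j \<Longrightarrow> shift j q f z = undefined"
  by (cases z) (simp add: shift_def)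

lemma claimC:
  assumes x: "x \<in> infpaths k G" and p: "p \<in> NN k" and q: "q \<in> NN k" and m: "m \<in> NN l" and n: "n \<in> NN l"
  shows "shift (k + l) (jn k p m) (Yp k l \<alpha> x) = shift (k + l) (jn k q n) (Yp k l \<alpha> x) \<longleftrightarrow>
    shift k p (autinf k (\<alpha> (- toZ m)) x) = shift k q (autinf k (\<alpha> (- toZ n)) x)"
proof
  assume E: "shift (k + l) (jn k p m) (Yp k l \<alpha> x) = shift (k + l) (jn k q n) (Yp k l \<alpha> x)"
  show "shift k p (autinf k (\<alpha> (- toZ m)) x) = shift k q (autinf k (\<alpha> (- toZ n)) x)"
  proof (rule ext, clarify)
    fix a b
    show "shift k p (autinf k (\<alpha> (- toZ m)) x) (a, b) = shift k q (autinf k (\<alpha> (- toZ n)) x) (a, b)"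
    proof (cases "(a, b) \<in> Omega k")
      case False thus ?thesis by (simp add: shift_undef)
    next
      case ab: True
      have O: "(jn k a 0, jn k b 0) \<in> Omega (k + l)" using ab jn_NN NN_0 jn_mono by (simp add: Omega_iff)
      have an: "a \<in> NN k" "b \<in> NN k" using ab by (auto simp: Omega_iff)
      have Lp: "(p + a, p + b) \<in> Omega k" "(q + a, q + b) \<in> Omega k"
        using ab p q NN_add by (auto simp: Omega_iff add_left_mono)
      have xm: "x (p + a, p + b) \<in> mor G" "x (q + a, q + b) \<in> mor G"
        using infpathsD(1)[OF x Lp(1)] infpathsD(1)[OF x Lp(2)] by blast+
      have mm: "\<alpha> (- toZ m) (x (p + a, p + b)) \<in> mor G" "\<alpha> (- toZ n) (x (q + a, q + b)) \<in> mor G"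
        using act_mor xm toZ_ZZ ZZ_uminus m n by blast+
      have "shift (k + l) (jn k p m) (Yp k l \<alpha> x) (jn k a 0, jn k b 0) = shift (k + l) (jn k q n) (Yp k l \<alpha> x) (jn k a 0, jn k b 0)"
        using E by simp
      hence "\<alpha> 0 (\<alpha> (- toZ m) (x (p + a, p + b))) = \<alpha> 0 (\<alpha> (- toZ n) (x (q + a, q + b)))"
        using shiftY[OF x O p m] shiftY[OF x O q n] lo_jn[OF an(1)] lo_jn[OF an(2)] hi_jn toZ_0 by simp
      hence "\<alpha> (- toZ m) (x (p + a, p + b)) = \<alpha> (- toZ n) (x (q + a, q + b))" using act_0 mm by simp
      thus ?thesis using shiftX[OF ab p, of "\<alpha> (- toZ m)" x] shiftX[OF ab q, of "\<alpha> (- toZ n)" x] by simp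
    qed
  qed
next
  assume E: "shift k p (autinf k (\<alpha> (- toZ m)) x) = shift k q (autinf k (\<alpha> (- toZ n)) x)"
  show "shift (k + l) (jn k p m) (Yp k l \<alpha> x) = shift (k + l) (jn k q n) (Yp k l \<alpha> x)"
  proof (rule ext, clarify)
    fix a b
    show "shift (k + l) (jn k p m) (Yp k l \<alpha> x) (a, b) = shift (k + l) (jn k q n) (Yp k l \<alpha> x) (a, b)"
    proof (cases "(a, b) \<in> Omega (k + l)")
      case False thus ?thesis by (simp add: shift_undef)
    next
      case ab: True
      have L: "(lo k a, lo k b) \<in> Omega k" using ab lo_NN lo_mono by (simp add: Omega_iff)
      have "shift k p (autinf k (\<alpha> (- toZ m)) x) (lo k a, lo k b) = shift k q (autinf k (\<alpha> (- toZ n)) x) (lo k a, lo k b)"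
        using E by simp
      hence "\<alpha> (- toZ m) (x (p + lo k a, p + lo k b)) = \<alpha> (- toZ n) (x (q + lo k a, q + lo k b))"
        using shiftX[OF L p, of "\<alpha> (- toZ m)" x] shiftX[OF L q, of "\<alpha> (- toZ n)" x] by simp
      thus ?thesis using shiftY[OF x ab p m] shiftY[OF x ab q n] by simp
    qed
  qed
qed

lemma Y00: "x \<in> infpaths k G \<Longrightarrow> Yp k l \<alpha> x (0, 0) = (x (0, 0), 0)"
proof -
  assume x: "x \<in> infpaths k G"
  have O: "(0, 0) \<in> Omega (k + l)" "(0,0) \<in> Omega k" using NN_0 by (simp_all add: Omega_iff)
  have "x (0, 0) \<in> mor G" using infpathsD(1)[OF x O(2)] by blast
  thus ?thesis using O act_0 lo_0 hi_0 toZ_0 fdiff_self by (simp add: Yp_def)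
qed
end

theorem lemma4p7:
  fixes k l :: nat and G :: "'m kg" and \<alpha> :: "(nat \<Rightarrow> int) \<Rightarrow> 'm \<Rightarrow> 'm"
  assumes "kgraph k G" and "row_finite k G" and "no_sources k G" and "is_action l G \<alpha>"
  shows "alpha_aperiodic k l G \<alpha> \<longleftrightarrow> no_local_periodicity (k + l) (crossed k l G \<alpha>)"
proof
  note KG = assms(1) and ACT = assms(4)
  assume AA: "alpha_aperiodic k l G \<alpha>"
  show "no_local_periodicity (k + l) (crossed k l G \<alpha>)"
    unfolding no_local_periodicity_def
  proof (intro allI impI)
    fix w c d
    assume w: "vertex (crossed k l G \<alpha>) w" and c: "c \<in> NN (k + l)" and d: "d \<in> NN (k + l)" and cd: "c \<noteq> d"
    obtain v where v: "w = (v, 0)" "vertex G v" using w vertex_crossed[OF KG ACT] by blast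
    have ceq: "jn k (lo k c) (hi k c) = c" "jn k (lo k d) (hi k d) = d" using jn_lohi c d by blast+
    have ne: "(lo k c, hi k c) \<noteq> (lo k d, hi k d)"
    proof
      assume "(lo k c, hi k c) = (lo k d, hi k d)"
      hence "jn k (lo k c) (hi k c) = jn k (lo k d) (hi k d)" by simp
      thus False using ceq cd by simp
    qed
    have AA': "\<exists>x\<in>vinfpaths k G v.
           shift k (lo k c) (autinf k (\<alpha> (- toZ (hi k c))) x) \<noteq> shift k (lo k d) (autinf k (\<alpha> (- toZ (hi k d))) x)"
      using AA unfolding alpha_aperiodic_def
      by (elim allE impE) (rule v(2), rule lo_NN, rule lo_NN, rule hi_NN[OF c], rule hi_NN[OF d], rule ne, assumption)
    obtain x where x: "x \<in> vinfpaths k G v" and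
      xs: "shift k (lo k c) (autinf k (\<alpha> (- toZ (hi k c))) x) \<noteq> shift k (lo k d) (autinf k (\<alpha> (- toZ (hi k d))) x)"
      using AA' by blast
    have xi: "x \<in> infpaths k G" "x (0, 0) = v" using x by (auto simp: vinfpaths_def)
    have "Yp k l \<alpha> x \<in> vinfpaths (k + l) (crossed k l G \<alpha>) w"
      using claimA[OF KG ACT xi(1)] Y00[OF KG ACT xi(1)] xi(2) v(1) by (simp add: vinfpaths_def)
    moreover have "shift (k + l) (jn k (lo k c) (hi k c)) (Yp k l \<alpha> x) \<noteq> shift (k + l) (jn k (lo k d) (hi k d)) (Yp k l \<alpha> x)"
      using claimC[OF KG ACT xi(1) lo_NN lo_NN hi_NN[OF c] hi_NN[OF d]] xs by simp
    hence "shift (k + l) c (Yp k l \<alpha> x) \<noteq> shift (k + l) d (Yp k l \<alpha> x)" unfolding ceq .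
    ultimately show "\<exists>y\<in>vinfpaths (k + l) (crossed k l G \<alpha>) w. shift (k + l) c y \<noteq> shift (k + l) d y"
      by blast
  qed
next
  note KG = assms(1) and ACT = assms(4)
  assume NL: "no_local_periodicity (k + l) (crossed k l G \<alpha>)"
  show "alpha_aperiodic k l G \<alpha>"
    unfolding alpha_aperiodic_def
  proof (intro allI impI)
    fix v p q m n
    assume v: "vertex G v" and p: "p \<in> NN k" and q: "q \<in> NN k" and m: "m \<in> NN l" and n: "n \<in> NN l"
      and ne: "(p, m) \<noteq> (q, n)"
    have ne': "jn k p m \<noteq> jn k q n" using jn_inj[OF p q] ne by blast
    have w: "vertex (crossed k l G \<alpha>) (v, 0)" using vertex_crossed[OF KG ACT] v by blast
    obtain y where y: "y \<in> vinfpaths (k + l) (crossed k l G \<alpha>) (v, 0)" and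
      ys: "shift (k + l) (jn k p m) y \<noteq> shift (k + l) (jn k q n) y"
      using NL unfolding no_local_periodicity_def
      by (elim allE impE) (rule w, rule jn_NN[OF p m], rule jn_NN[OF q n], rule ne', blast)
    have yi: "y \<in> infpaths (k + l) (crossed k l G \<alpha>)" "y (0, 0) = (v, 0)" using y by (auto simp: vinfpaths_def)
    define x where "x = Xp k y"
    have xi: "x \<in> infpaths k G" "y = Yp k l \<alpha> x" using claimB[OF KG ACT yi(1)] x_def by auto
    have "x (0, 0) = v" using Y00[OF KG ACT xi(1)] xi(2) yi(2) by simp
    hence "x \<in> vinfpaths k G v" using xi(1) by (simp add: vinfpaths_def)
    moreover have "shift k p (autinf k (\<alpha> (- toZ m)) x) \<noteq> shift k q (autinf k (\<alpha> (- toZ n)) x)"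
      using claimC[OF KG ACT xi(1) p q m n] ys unfolding xi(2)[symmetric] by simp
    ultimately show "\<exists>x\<in>vinfpaths k G v.
           shift k p (autinf k (\<alpha> (- toZ m)) x) \<noteq> shift k q (autinf k (\<alpha> (- toZ n)) x)" by blast
  qed
qed

end
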